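(* Let $G_1$ and $G_2$ be two graphs of order $n$ that are cospectral with respect to the adjacency matrix, such that $Z_{-}(G_1)\neq Z_{-}(G_2)$ and $Z_{-}(G_i)=M_{-}(G_i)$ for $i=1,2$. Then there exist infinitely many pairs of graphs that are cospectral (with respect to the adjacency matrix) and have different zero forcing numbers and different skew zero forcing numbers.
   Context: All graphs are finite, simple and undirected. Two graphs are cospectral (with respect to the adjacency matrix) if their adjacency matrices have the same multiset of eigenvalues. The zero forcing number $Z(G)$ is the minimum size of a set $S\subseteq V(G)$ such that, if the vertices of $S$ are colored blue and all others white, repeated application of the rule "a blue vertex with exactly one white neighbor forces that neighbor to become blue" eventually makes every vertex blue. The skew zero forcing number $Z_{-}(G)$ is defined in the same way but with the rule "any vertex (blue or white) that has exactly one white neighbor forces that neighbor to become blue". $M_{-}(G)$ denotes the maximum nullity over all real skew-symmetric $n\times n$ matrices $B=[b_{ij}]$ with $b_{ij}\neq 0$ if and only if $\{i,j\}$ is an edge of $G$. *)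

theory Defs
  imports "Jordan_Normal_Form.Char_Poly" "Jordan_Normal_Form.Matrix_Kernel"
begin

text \<open>A (labelled) finite simple graph of order n: vertex set {0..<n}, edge relation E
  (symmetric, irreflexive, contained in the vertex set).\<close>
type_synonym graph = "nat \<times> (nat \<times> nat) set"

definition simple_graph :: "graph \<Rightarrow> bool" where
  "simple_graph G \<longleftrightarrow> snd G \<subseteq> {0..<fst G} \<times> {0..<fst G}
     \<and> (\<forall>u v. (u, v) \<in> snd G \<longrightarrow> (v, u) \<in> snd G)
     \<and> (\<forall>u. (u, u) \<notin> snd G)"

definition adj_matrix :: "graph \<Rightarrow> real mat" where
  "adj_matrix G = mat (fst G) (fst G) (\<lambda>(i, j). if (i, j) \<in> snd G then 1 else 0)"

definition adj_spectrum :: "graph \<Rightarrow> complex multiset" where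
  "adj_spectrum G = proots (map_poly complex_of_real (char_poly (adj_matrix G)))"

definition cospectral :: "graph \<Rightarrow> graph \<Rightarrow> bool" where
  "cospectral G H \<longleftrightarrow> adj_spectrum G = adj_spectrum H"

inductive_set zf_closure :: "graph \<Rightarrow> nat set \<Rightarrow> nat set" for G S where
  init: "v \<in> S \<Longrightarrow> v \<in> zf_closure G S"
| force: "\<lbrakk> u \<in> zf_closure G S; (u, w) \<in> snd G;
           \<forall>x. (u, x) \<in> snd G \<and> x \<noteq> w \<longrightarrow> x \<in> zf_closure G S \<rbrakk>
          \<Longrightarrow> w \<in> zf_closure G S"

inductive_set szf_closure :: "graph \<Rightarrow> nat set \<Rightarrow> nat set" for G S where
  init: "v \<in> S \<Longrightarrow> v \<in> szf_closure G S"
| force: "\<lbrakk> u < fst G; (u, w) \<in> snd G;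
           \<forall>x. (u, x) \<in> snd G \<and> x \<noteq> w \<longrightarrow> x \<in> szf_closure G S \<rbrakk>
          \<Longrightarrow> w \<in> szf_closure G S"

definition zero_forcing_number :: "graph \<Rightarrow> nat" where
  "zero_forcing_number G = (LEAST k. \<exists>S. S \<subseteq> {0..<fst G} \<and> card S = k
      \<and> zf_closure G S = {0..<fst G})"

definition skew_zero_forcing_number :: "graph \<Rightarrow> nat" where
  "skew_zero_forcing_number G = (LEAST k. \<exists>S. S \<subseteq> {0..<fst G} \<and> card S = k
      \<and> szf_closure G S = {0..<fst G})"

definition skew_pattern_matrices :: "graph \<Rightarrow> real mat set" where
  "skew_pattern_matrices G = {B. B \<in> carrier_mat (fst G) (fst G)
      \<and> (\<forall>i<fst G. \<forall>j<fst G. B $$ (i, j) = - B $$ (j, i))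
      \<and> (\<forall>i<fst G. \<forall>j<fst G. B $$ (i, j) \<noteq> 0 \<longleftrightarrow> (i, j) \<in> snd G)}"

definition max_skew_nullity :: "graph \<Rightarrow> nat" where
  "max_skew_nullity G = Max (kernel_dim ` skew_pattern_matrices G)"

end

theory Submission
  imports Defs
begin

definition gu :: "graph \<Rightarrow> graph \<Rightarrow> graph" where
  "gu G H = (fst G + fst H, snd G \<union> (\<lambda>(a,b). (a + fst G, b + fst G)) ` snd H)"

lemma char_poly_block_diag:
  fixes A :: "'a :: idom mat"
  assumes A: "A \<in> carrier_mat n n" and B: "B \<in> carrier_mat m m"
  shows "char_poly (four_block_mat A (0\<^sub>m n m) (0\<^sub>m m n) B) = char_poly A * char_poly B"
proof -
  let ?cm = "\<lambda> A. [:0, 1:] \<cdot>\<^sub>m 1\<^sub>m (dim_row A) + map_mat (\<lambda>a. [:- a:]) A"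
  have "char_poly (four_block_mat A (0\<^sub>m n m) (0\<^sub>m m n) B) = det (?cm (four_block_mat A (0\<^sub>m n m) (0\<^sub>m m n) B))"
    unfolding char_poly_defs using A B by simp
  also have "?cm (four_block_mat A (0\<^sub>m n m) (0\<^sub>m m n) B) = four_block_mat (?cm A) (0\<^sub>m n m) (0\<^sub>m m n) (?cm B)"
    by (rule eq_matI, insert A B, auto simp: one_poly_def)
  also have "det \<dots> = det (?cm A) * det (?cm B)"
    by (rule det_four_block_mat_lower_left_zero, insert A B, auto)
  also have "\<dots> = char_poly A * char_poly B" unfolding char_poly_defs ..
  finally show ?thesis .
qed

lemma adj_matrix_gu:
  assumes "simple_graph (n,E)" "simple_graph (m,F)"
  shows "adj_matrix (gu (n,E) (m,F)) = four_block_mat (adj_matrix (n,E)) (0\<^sub>m n m) (0\<^sub>m m n) (adj_matrix (m,F))"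
proof (intro eq_matI)
  fix i j assume i: "i < dim_row (four_block_mat (adj_matrix (n,E)) (0\<^sub>m n m) (0\<^sub>m m n) (adj_matrix (m,F)))"
    and j: "j < dim_col (four_block_mat (adj_matrix (n,E)) (0\<^sub>m n m) (0\<^sub>m m n) (adj_matrix (m,F)))"
  have iff: "(i,j) \<in> (\<lambda>(a,b). (a + n, b + n)) ` F \<longleftrightarrow> n \<le> i \<and> n \<le> j \<and> (i - n, j - n) \<in> F"
  proof
    assume "(i,j) \<in> (\<lambda>(a,b). (a + n, b + n)) ` F" then show "n \<le> i \<and> n \<le> j \<and> (i - n, j - n) \<in> F" by auto
  next
    assume h: "n \<le> i \<and> n \<le> j \<and> (i - n, j - n) \<in> F"
    then have "(i,j) = (\<lambda>(a,b). (a + n, b + n)) (i-n, j-n)" by auto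
    with h show "(i,j) \<in> (\<lambda>(a,b). (a + n, b + n)) ` F" by blast
  qed
  show "adj_matrix (gu (n, E) (m, F)) $$ (i, j) = four_block_mat (adj_matrix (n,E)) (0\<^sub>m n m) (0\<^sub>m m n) (adj_matrix (m,F)) $$ (i, j)"
    using i j assms iff unfolding simple_graph_def adj_matrix_def gu_def
    by (auto simp: four_block_mat_def)
qed (auto simp: adj_matrix_def gu_def)

lemma char_poly_adj_nz: "char_poly (adj_matrix G) \<noteq> 0"
proof -
  have "adj_matrix G \<in> carrier_mat (fst G) (fst G)" unfolding adj_matrix_def by simp
  from degree_monic_char_poly[OF this] show ?thesis by auto
qed

lemma spectrum_gu:
  assumes "simple_graph (n,E)" "simple_graph (m,F)"
  shows "adj_spectrum (gu (n,E) (m,F)) = adj_spectrum (n,E) + adj_spectrum (m,F)"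
proof -
  have c: "char_poly (adj_matrix (gu (n,E) (m,F))) = char_poly (adj_matrix (n,E)) * char_poly (adj_matrix (m,F))"
    unfolding adj_matrix_gu[OF assms] by (rule char_poly_block_diag) (auto simp: adj_matrix_def)
  interpret h: map_poly_idom_hom complex_of_real by unfold_locales
  show ?thesis unfolding adj_spectrum_def c h.hom_mult
    by (rule proots_mult) (auto simp: char_poly_adj_nz)
qed

lemma cospectral_gu:
  assumes "simple_graph (n,E)" "simple_graph (m,F)" "simple_graph (n',E')" "simple_graph (m',F')"
   "cospectral (n,E) (n',E')" "cospectral (m,F) (m',F')"
  shows "cospectral (gu (n,E) (m,F)) (gu (n',E') (m',F'))"
  using assms unfolding cospectral_def by (simp add: spectrum_gu)



lemma zf_bound: assumes "simple_graph (n,E)" shows "zf_closure (n,E) S \<subseteq> S \<union> {0..<n}"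
proof
  fix x assume "x \<in> zf_closure (n,E) S" then show "x \<in> S \<union> {0..<n}"
    by induction (use assms in \<open>auto simp: simple_graph_def\<close>)
qed

lemma szf_bound: assumes "simple_graph (n,E)" shows "szf_closure (n,E) S \<subseteq> S \<union> {0..<n}"
proof
  fix x assume "x \<in> szf_closure (n,E) S" then show "x \<in> S \<union> {0..<n}"
    by induction (use assms in \<open>auto simp: simple_graph_def\<close>)
qed

lemma zf_sub: "S \<subseteq> zf_closure G S" by (auto intro: zf_closure.init)
lemma szf_sub: "S \<subseteq> szf_closure G S" by (auto intro: szf_closure.init)

lemma zf_gu:
  assumes sG: "simple_graph (n,E)" and sH: "simple_graph (m,F)"
  shows "zf_closure (gu (n,E) (m,F)) S = zf_closure (n,E) (S \<inter> {..<n}) \<union> (\<lambda>x. x + n) ` zf_closure (m,F) {x. x + n \<in> S}"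
    (is "?U = ?L \<union> ?R")
proof
  have EL: "\<And>a b. (a,b) \<in> E \<Longrightarrow> a < n \<and> b < n" using sG unfolding simple_graph_def by auto
  have FL: "\<And>a b. (a,b) \<in> F \<Longrightarrow> a < m \<and> b < m" using sH unfolding simple_graph_def by auto
  have Lb: "\<And>x. x \<in> ?L \<Longrightarrow> x < n" using zf_bound[OF sG, of "S \<inter> {..<n}"] by auto
  have edges: "snd (gu (n,E) (m,F)) = E \<union> (\<lambda>(a,b). (a + n, b + n)) ` F" unfolding gu_def by simp
  show "?U \<subseteq> ?L \<union> ?R"
  proof
    fix x assume "x \<in> ?U" then show "x \<in> ?L \<union> ?R"
    proof induct
      case (init v)
      show ?case
      proof (cases "v < n")
        case True then show ?thesis using init by (auto intro: zf_closure.init)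
      next
        case False
        then have "v = (v - n) + n" by simp
        moreover have "v - n \<in> zf_closure (m,F) {x. x + n \<in> S}" using init False by (auto intro: zf_closure.init)
        ultimately show ?thesis by blast
      qed
    next
      case (force u w)
      from force(3) have "(u,w) \<in> E \<or> (\<exists>a b. (a,b) \<in> F \<and> u = a + n \<and> w = b + n)" unfolding edges by auto
      then show ?case
      proof
        assume uw: "(u,w) \<in> E"
        with EL have un: "u < n" "w < n" by auto
        have "u \<in> ?L" using force(2) un by auto
        moreover have "\<forall>x. (u, x) \<in> snd (n,E) \<and> x \<noteq> w \<longrightarrow> x \<in> ?L"
        proof (intro allI impI)
          fix x assume "(u, x) \<in> snd (n,E) \<and> x \<noteq> w"
          then have "(u,x) \<in> snd (gu (n,E) (m,F))" "x \<noteq> w" "x < n" using EL unfolding edges by auto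
          with force(4) show "x \<in> ?L" by auto
        qed
        ultimately have "w \<in> ?L" using uw by (auto intro: zf_closure.force)
        then show ?thesis by blast
      next
        assume "\<exists>a b. (a,b) \<in> F \<and> u = a + n \<and> w = b + n"
        then obtain a b where ab: "(a,b) \<in> F" "u = a + n" "w = b + n" by blast
        have "u \<notin> ?L" using Lb ab by force
        then have "a \<in> zf_closure (m,F) {x. x + n \<in> S}" using force(2) ab by auto
        moreover have "\<forall>x. (a, x) \<in> snd (m,F) \<and> x \<noteq> b \<longrightarrow> x \<in> zf_closure (m,F) {x. x + n \<in> S}"
        proof (intro allI impI)
          fix x assume x: "(a, x) \<in> snd (m,F) \<and> x \<noteq> b"
          then have "(u,x+n) \<in> snd (gu (n,E) (m,F))" "x + n \<noteq> w" unfolding edges using ab by force+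
          with force(4) have "x + n \<in> ?L \<union> ?R" by auto
          moreover have "x + n \<notin> ?L" using Lb by force
          ultimately show "x \<in> zf_closure (m,F) {x. x + n \<in> S}" by auto
        qed
        ultimately have "b \<in> zf_closure (m,F) {x. x + n \<in> S}" using ab by (auto intro: zf_closure.force)
        then show ?thesis using ab by blast
      qed
    qed
  qed
next
  have EL: "\<And>a b. (a,b) \<in> E \<Longrightarrow> a < n \<and> b < n" using sG unfolding simple_graph_def by auto
  have edges: "snd (gu (n,E) (m,F)) = E \<union> (\<lambda>(a,b). (a + n, b + n)) ` F" unfolding gu_def by simp
  have "?L \<subseteq> ?U"
  proof
    fix x assume "x \<in> ?L" then show "x \<in> ?U"
    proof induct
      case (init v) then show ?case by (auto intro: zf_closure.init)
    next
      case (force u w)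
      have "(u,w) \<in> snd (gu (n,E) (m,F))" using force(3) unfolding edges by auto
      moreover have "\<forall>x. (u, x) \<in> snd (gu (n,E) (m,F)) \<and> x \<noteq> w \<longrightarrow> x \<in> ?U"
      proof (intro allI impI)
        fix x assume x: "(u, x) \<in> snd (gu (n,E) (m,F)) \<and> x \<noteq> w"
        have un: "u < n" using force(3) EL by auto
        from x have "(u,x) \<in> E" unfolding edges using un by auto
        with force(4) x show "x \<in> ?U" by auto
      qed
      ultimately show ?case using force(2) by (auto intro: zf_closure.force)
    qed
  qed
  moreover have "?R \<subseteq> ?U"
  proof
    fix y assume "y \<in> ?R"
    then obtain x where x: "x \<in> zf_closure (m,F) {x. x + n \<in> S}" "y = x + n" by blast
    from x(1) have "x + n \<in> ?U"
    proof induct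
      case (init v) then show ?case by (auto intro: zf_closure.init)
    next
      case (force u w)
      have "(u+n,w+n) \<in> snd (gu (n,E) (m,F))" using force(3) unfolding edges by force
      moreover have "\<forall>x. (u+n, x) \<in> snd (gu (n,E) (m,F)) \<and> x \<noteq> w+n \<longrightarrow> x \<in> ?U"
      proof (intro allI impI)
        fix x assume x: "(u+n, x) \<in> snd (gu (n,E) (m,F)) \<and> x \<noteq> w+n"
        have "(u+n,x) \<notin> E" using EL by force
        with x obtain b where "(u,b) \<in> F" "x = b + n" "b \<noteq> w" unfolding edges by auto
        with force(4) show "x \<in> ?U" by auto
      qed
      ultimately show ?case using force(2) by (auto intro: zf_closure.force)
    qed
    with x show "y \<in> ?U" by simp
  qed
  ultimately show "?L \<union> ?R \<subseteq> ?U" by blast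
qed



lemma szf_gu:
  assumes sG: "simple_graph (n,E)" and sH: "simple_graph (m,F)"
  shows "szf_closure (gu (n,E) (m,F)) S = szf_closure (n,E) (S \<inter> {..<n}) \<union> (\<lambda>x. x + n) ` szf_closure (m,F) {x. x + n \<in> S}"
    (is "?U = ?L \<union> ?R")
proof
  have EL: "\<And>a b. (a,b) \<in> E \<Longrightarrow> a < n \<and> b < n" using sG unfolding simple_graph_def by auto
  have FL: "\<And>a b. (a,b) \<in> F \<Longrightarrow> a < m \<and> b < m" using sH unfolding simple_graph_def by auto
  have Lb: "\<And>x. x \<in> ?L \<Longrightarrow> x < n" using szf_bound[OF sG, of "S \<inter> {..<n}"] by auto
  have edges: "snd (gu (n,E) (m,F)) = E \<union> (\<lambda>(a,b). (a + n, b + n)) ` F" unfolding gu_def by simp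
  show "?U \<subseteq> ?L \<union> ?R"
  proof
    fix x assume "x \<in> ?U" then show "x \<in> ?L \<union> ?R"
    proof induct
      case (init v)
      show ?case
      proof (cases "v < n")
        case True then show ?thesis using init by (auto intro: szf_closure.init)
      next
        case False
        then have "v = (v - n) + n" by simp
        moreover have "v - n \<in> szf_closure (m,F) {x. x + n \<in> S}" using init False by (auto intro: szf_closure.init)
        ultimately show ?thesis by blast
      qed
    next
      case (force u w)
      from force(2) have "(u,w) \<in> E \<or> (\<exists>a b. (a,b) \<in> F \<and> u = a + n \<and> w = b + n)" unfolding edges by auto
      then show ?case
      proof
        assume uw: "(u,w) \<in> E"
        with EL have un: "u < n" "w < n" by auto
        moreover have "\<forall>x. (u, x) \<in> snd (n,E) \<and> x \<noteq> w \<longrightarrow> x \<in> ?L"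
        proof (intro allI impI)
          fix x assume "(u, x) \<in> snd (n,E) \<and> x \<noteq> w"
          then have "(u,x) \<in> snd (gu (n,E) (m,F))" "x \<noteq> w" "x < n" using EL unfolding edges by auto
          with force(3) show "x \<in> ?L" by auto
        qed
        ultimately have "w \<in> ?L" using uw by (auto intro: szf_closure.force)
        then show ?thesis by blast
      next
        assume "\<exists>a b. (a,b) \<in> F \<and> u = a + n \<and> w = b + n"
        then obtain a b where ab: "(a,b) \<in> F" "u = a + n" "w = b + n" by blast
        have "a < m" using FL ab by auto
        moreover have "\<forall>x. (a, x) \<in> snd (m,F) \<and> x \<noteq> b \<longrightarrow> x \<in> szf_closure (m,F) {x. x + n \<in> S}"
        proof (intro allI impI)
          fix x assume x: "(a, x) \<in> snd (m,F) \<and> x \<noteq> b"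
          then have "(u,x+n) \<in> snd (gu (n,E) (m,F))" "x + n \<noteq> w" unfolding edges using ab by force+
          with force(3) have "x + n \<in> ?L \<union> ?R" by auto
          moreover have "x + n \<notin> ?L" using Lb by force
          ultimately show "x \<in> szf_closure (m,F) {x. x + n \<in> S}" by auto
        qed
        ultimately have "b \<in> szf_closure (m,F) {x. x + n \<in> S}" using ab by (auto intro: szf_closure.force)
        then show ?thesis using ab by blast
      qed
    qed
  qed
next
  have EL: "\<And>a b. (a,b) \<in> E \<Longrightarrow> a < n \<and> b < n" using sG unfolding simple_graph_def by auto
  have FL: "\<And>a b. (a,b) \<in> F \<Longrightarrow> a < m \<and> b < m" using sH unfolding simple_graph_def by auto
  have edges: "snd (gu (n,E) (m,F)) = E \<union> (\<lambda>(a,b). (a + n, b + n)) ` F" unfolding gu_def by simp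
  have "?L \<subseteq> ?U"
  proof
    fix x assume "x \<in> ?L" then show "x \<in> ?U"
    proof induct
      case (init v) then show ?case by (auto intro: szf_closure.init)
    next
      case (force u w)
      have e: "(u,w) \<in> snd (gu (n,E) (m,F))" using force(2) unfolding edges by auto
      have un: "u < n" using force(2) EL by auto
      then have uf: "u < fst (gu (n,E) (m,F))" by (simp add: gu_def)
      have al: "\<forall>x. (u, x) \<in> snd (gu (n,E) (m,F)) \<and> x \<noteq> w \<longrightarrow> x \<in> ?U"
      proof (intro allI impI)
        fix x assume x: "(u, x) \<in> snd (gu (n,E) (m,F)) \<and> x \<noteq> w"
        from x have "(u,x) \<in> E" unfolding edges using un by auto
        with force(3) x show "x \<in> ?U" by auto
      qed
      show ?case by (rule szf_closure.force[OF uf e al])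
    qed
  qed
  moreover have "?R \<subseteq> ?U"
  proof
    fix y assume "y \<in> ?R"
    then obtain x where x: "x \<in> szf_closure (m,F) {x. x + n \<in> S}" "y = x + n" by blast
    from x(1) have "x + n \<in> ?U"
    proof induct
      case (init v) then show ?case by (auto intro: szf_closure.init)
    next
      case (force u w)
      have "(u+n,w+n) \<in> snd (gu (n,E) (m,F))" using force(2) unfolding edges by force
      moreover have "u + n < fst (gu (n,E) (m,F))" using force(2) FL by (auto simp: gu_def)
      moreover have "\<forall>x. (u+n, x) \<in> snd (gu (n,E) (m,F)) \<and> x \<noteq> w+n \<longrightarrow> x \<in> ?U"
      proof (intro allI impI)
        fix x assume x: "(u+n, x) \<in> snd (gu (n,E) (m,F)) \<and> x \<noteq> w+n"
        have "(u+n,x) \<notin> E" using EL by force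
        with x obtain b where "(u,b) \<in> F" "x = b + n" "b \<noteq> w" unfolding edges by auto
        with force(3) show "x \<in> ?U" by auto
      qed
      ultimately show ?case by (auto intro: szf_closure.force)
    qed
    with x show "y \<in> ?U" by simp
  qed
  ultimately show "?L \<union> ?R \<subseteq> ?U" by blast
qed

definition fnum :: "(graph \<Rightarrow> nat set \<Rightarrow> nat set) \<Rightarrow> graph \<Rightarrow> nat" where
  "fnum cl G = (LEAST k. \<exists>S. S \<subseteq> {0..<fst G} \<and> card S = k \<and> cl G S = {0..<fst G})"

lemma zfn_fnum: "zero_forcing_number G = fnum zf_closure G"
  unfolding zero_forcing_number_def fnum_def ..
lemma szfn_fnum: "skew_zero_forcing_number G = fnum szf_closure G"
  unfolding skew_zero_forcing_number_def fnum_def ..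

definition okcl :: "(graph \<Rightarrow> nat set \<Rightarrow> nat set) \<Rightarrow> graph \<Rightarrow> bool" where
  "okcl cl G \<longleftrightarrow> (\<forall>A. A \<subseteq> {0..<fst G} \<longrightarrow> A \<subseteq> cl G A \<and> cl G A \<subseteq> {0..<fst G})"

lemma okclD: "okcl cl (n,E) \<Longrightarrow> A \<subseteq> {0..<n} \<Longrightarrow> A \<subseteq> cl (n,E) A \<and> cl (n,E) A \<subseteq> {0..<n}"
  unfolding okcl_def by auto

lemma okcl_zf: "simple_graph (n,E) \<Longrightarrow> okcl zf_closure (n,E)"
  unfolding okcl_def using zf_bound zf_sub by fastforce
lemma okcl_szf: "simple_graph (n,E) \<Longrightarrow> okcl szf_closure (n,E)"
  unfolding okcl_def using szf_bound szf_sub by fastforce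

lemma fnum_ex: assumes "okcl cl G"
  shows "\<exists>S. S \<subseteq> {0..<fst G} \<and> card S = fnum cl G \<and> cl G S = {0..<fst G}"
proof -
  have "\<exists>S. S \<subseteq> {0..<fst G} \<and> card S = card {0..<fst G} \<and> cl G S = {0..<fst G}"
    using assms unfolding okcl_def by (intro exI[of _ "{0..<fst G}"]) auto
  then show ?thesis unfolding fnum_def by (rule LeastI)
qed

lemma fnum_le: assumes "S \<subseteq> {0..<fst G}" "cl G S = {0..<fst G}"
  shows "fnum cl G \<le> card S"
  unfolding fnum_def by (rule Least_le) (use assms in blast)

lemma fnum_gu:
  assumes dec: "\<And>S. cl (gu (n,E) (m,F)) S = cl (n,E) (S \<inter> {..<n}) \<union> (\<lambda>x. x + n) ` cl (m,F) {x. x + n \<in> S}"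
    and oG: "okcl cl (n,E)" and oH: "okcl cl (m,F)"
  shows "fnum cl (gu (n,E) (m,F)) = fnum cl (n,E) + fnum cl (m,F)"
proof (rule antisym)
  obtain S1 where S1: "S1 \<subseteq> {0..<n}" "card S1 = fnum cl (n,E)" "cl (n,E) S1 = {0..<n}"
    using fnum_ex[OF oG] by auto
  obtain S2 where S2: "S2 \<subseteq> {0..<m}" "card S2 = fnum cl (m,F)" "cl (m,F) S2 = {0..<m}"
    using fnum_ex[OF oH] by auto
  let ?S = "S1 \<union> (\<lambda>x. x + n) ` S2"
  have sub: "?S \<subseteq> {0..<fst (gu (n,E) (m,F))}" using S1 S2 by (auto simp: gu_def)
  have a: "?S \<inter> {..<n} = S1" using S1 by auto
  have b: "{x. x + n \<in> ?S} = S2" using S1 by auto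
  have "cl (gu (n,E) (m,F)) ?S = {0..<n} \<union> (\<lambda>x. x + n) ` {0..<m}"
    unfolding dec a b S1 S2 ..
  also have "\<dots> = {0..<fst (gu (n,E) (m,F))}"
  proof -
    have "(\<lambda>x. x + n) ` {0..<m} = {n..<n+m}" by (simp add: add.commute)
    then show ?thesis by (auto simp: gu_def)
  qed
  finally have "fnum cl (gu (n,E) (m,F)) \<le> card ?S" by (intro fnum_le[OF sub])
  also have "card ?S = card S1 + card S2"
  proof -
    have "finite S1" using S1(1) by (meson finite_atLeastLessThan finite_subset)
    moreover have "finite S2" using S2(1) by (meson finite_atLeastLessThan finite_subset)
    moreover have "S1 \<inter> (\<lambda>x. x + n) ` S2 = {}" using S1 by auto
    ultimately show ?thesis by (simp add: card_Un_disjoint card_image)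
  qed
  finally show "fnum cl (gu (n,E) (m,F)) \<le> fnum cl (n,E) + fnum cl (m,F)" using S1 S2 by simp
next
  have oU: "okcl cl (gu (n,E) (m,F))"
    unfolding okcl_def
  proof (intro allI impI conjI)
    fix A assume A: "A \<subseteq> {0..<fst (gu (n, E) (m, F))}"
    have A1: "A \<inter> {..<n} \<subseteq> {0..<n}" by auto
    have A2: "{x. x + n \<in> A} \<subseteq> {0..<m}" using A by (auto simp: gu_def)
    show "A \<subseteq> cl (gu (n, E) (m, F)) A"
    proof
      fix x assume x: "x \<in> A"
      show "x \<in> cl (gu (n, E) (m, F)) A"
      proof (cases "x < n")
        case True
        then have "x \<in> A \<inter> {..<n}" using x by simp
        then have "x \<in> cl (n,E) (A \<inter> {..<n})" using okclD[OF oG A1] by blast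
        then show ?thesis unfolding dec by blast
      next
        case False
        then have "x - n \<in> {x. x + n \<in> A}" using x by auto
        then have "x - n \<in> cl (m,F) {x. x + n \<in> A}" using okclD[OF oH A2] by blast
        then have "(x - n) + n \<in> (\<lambda>x. x + n) ` cl (m,F) {x. x + n \<in> A}" by blast
        then show ?thesis using False unfolding dec by simp
      qed
    qed
    show "cl (gu (n, E) (m, F)) A \<subseteq> {0..<fst (gu (n, E) (m, F))}"
      using okclD[OF oG A1] okclD[OF oH A2]
      unfolding dec by (auto simp: gu_def)
  qed
  obtain S where S: "S \<subseteq> {0..<n+m}" "card S = fnum cl (gu (n,E) (m,F))" "cl (gu (n,E) (m,F)) S = {0..<n+m}"
    using fnum_ex[OF oU] by (auto simp: gu_def)
  let ?S1 = "S \<inter> {..<n}" and ?S2 = "{x. x + n \<in> S}"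
  have A1: "?S1 \<subseteq> {0..<n}" by auto
  have A2: "?S2 \<subseteq> {0..<m}" using S by auto
  have L: "cl (n,E) ?S1 \<subseteq> {0..<n}" and R: "cl (m,F) ?S2 \<subseteq> {0..<m}"
    using okclD[OF oG A1] okclD[OF oH A2] by auto
  have eq: "cl (n,E) ?S1 \<union> (\<lambda>x. x + n) ` cl (m,F) ?S2 = {0..<n+m}" using S(3) unfolding dec .
  have c1: "cl (n,E) ?S1 = {0..<n}"
  proof
    show "{0..<n} \<subseteq> cl (n,E) ?S1"
    proof
      fix x assume "x \<in> {0..<n}"
      then have "x \<in> cl (n,E) ?S1 \<union> (\<lambda>x. x + n) ` cl (m,F) ?S2" using eq by auto
      then show "x \<in> cl (n,E) ?S1" using \<open>x \<in> {0..<n}\<close> by auto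
    qed
  qed (use L in auto)
  have c2: "cl (m,F) ?S2 = {0..<m}"
  proof
    show "{0..<m} \<subseteq> cl (m,F) ?S2"
    proof
      fix x assume "x \<in> {0..<m}"
      then have "x + n \<in> cl (n,E) ?S1 \<union> (\<lambda>x. x + n) ` cl (m,F) ?S2" using eq by auto
      moreover have "x + n \<notin> cl (n,E) ?S1" using L by auto
      ultimately show "x \<in> cl (m,F) ?S2" by auto
    qed
  qed (use R in auto)
  have c1': "cl (n,E) ?S1 = {0..<fst (n,E)}" using c1 by (simp only: fst_conv)
  have A1': "?S1 \<subseteq> {0..<fst (n,E)}" using A1 by (simp only: fst_conv)
  have c2': "cl (m,F) ?S2 = {0..<fst (m,F)}" using c2 by (simp only: fst_conv)
  have A2': "?S2 \<subseteq> {0..<fst (m,F)}" using A2 by (simp only: fst_conv)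
  have "fnum cl (n,E) \<le> card ?S1" by (rule fnum_le[where cl=cl and G="(n,E)", OF A1' c1'])
  moreover have "fnum cl (m,F) \<le> card ?S2" by (rule fnum_le[where cl=cl and G="(m,F)", OF A2' c2'])
  moreover have "card S = card ?S1 + card ?S2"
  proof -
    have fin: "finite S" using S finite_subset by blast
    have "S = ?S1 \<union> (\<lambda>x. x + n) ` ?S2"
    proof
      show "S \<subseteq> ?S1 \<union> (\<lambda>x. x + n) ` ?S2"
      proof
        fix x assume x: "x \<in> S" show "x \<in> ?S1 \<union> (\<lambda>x. x + n) ` ?S2"
        proof (cases "x < n")
          case False
          then have "x = (x - n) + n" "x - n \<in> ?S2" using x by auto
          then show ?thesis by blast
        qed (use x in auto)
      qed
    qed auto
    moreover have "finite ?S2" using A2 finite_subset by blast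
    moreover have "?S1 \<inter> (\<lambda>x. x + n) ` ?S2 = {}" by auto
    ultimately have "card S = card ?S1 + card ((\<lambda>x. x + n) ` ?S2)"
      using fin by (metis card_Un_disjoint finite_Int finite_imageI)
    then show ?thesis by (simp add: card_image)
  qed
  ultimately show "fnum cl (n,E) + fnum cl (m,F) \<le> fnum cl (gu (n,E) (m,F))" using S by simp
qed

lemma zfn_gu: "simple_graph (n,E) \<Longrightarrow> simple_graph (m,F) \<Longrightarrow>
   zero_forcing_number (gu (n,E) (m,F)) = zero_forcing_number (n,E) + zero_forcing_number (m,F)"
  unfolding zfn_fnum by (rule fnum_gu[OF zf_gu okcl_zf okcl_zf])

lemma szfn_gu: "simple_graph (n,E) \<Longrightarrow> simple_graph (m,F) \<Longrightarrow>
   skew_zero_forcing_number (gu (n,E) (m,F)) = skew_zero_forcing_number (n,E) + skew_zero_forcing_number (m,F)"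
  unfolding szfn_fnum by (rule fnum_gu[OF szf_gu okcl_szf okcl_szf])

lemma simple_gu: "simple_graph (n,E) \<Longrightarrow> simple_graph (m,F) \<Longrightarrow> simple_graph (gu (n,E) (m,F))"
  unfolding simple_graph_def gu_def by fastforce



definition EK13 :: "(nat \<times> nat) set" where "EK13 = {(0,1),(1,0),(0,2),(2,0),(0,3),(3,0)}"
definition EK2 :: "(nat \<times> nat) set" where "EK2 = {(0,1),(1,0)}"
definition EP5 :: "(nat \<times> nat) set" where "EP5 = {(0,1),(1,0),(1,2),(2,1),(2,3),(3,2),(3,4),(4,3)}"

definition PL :: "real list list" where "PL = [[0,-1,0,-1,0,0],[1,0,-2,0,1,1],[-1,0,0,0,-1,-1],[-1,0,0,0,-1,0],[1,0,0,0,-1,0],[0,1,0,-1,0,0]]"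
definition QL :: "real list list" where "QL = [[0,0,0,-1/2,1/2,0],[-1/2,0,0,0,0,1/2],[0,-1/2,-1/2,0,0,0],[-1/2,0,0,0,0,-1/2],[0,0,0,-1/2,-1/2,0],[0,0,-1,1,0,0]]"
definition "PM = mat 6 6 (\<lambda>(i,j). PL ! i ! j)"
definition "QM = mat 6 6 (\<lambda>(i,j). QL ! i ! j)"

lemma less6: "(i::nat) < 6 \<Longrightarrow> i = 0 \<or> i = 1 \<or> i = 2 \<or> i = 3 \<or> i = 4 \<or> i = 5" by auto
lemma sum6: "(\<Sum>k\<in>{0..<6::nat}. f k) = f 0 + f 1 + f 2 + f 3 + f 4 + (f 5 :: real)"
  by (simp add: eval_nat_numeral atLeast0_lessThan_Suc)

lemma A_PM: "adj_matrix (gu (4,EK13) (2,EK2)) * PM = PM * adj_matrix (gu (5,EP5) (1,{}))"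
proof (rule eq_matI)
  fix i j assume "i < dim_row (PM * adj_matrix (gu (5,EP5) (1,{})))" "j < dim_col (PM * adj_matrix (gu (5,EP5) (1,{})))"
  then have i: "i < 6" and j: "j < 6" by (auto simp: PM_def adj_matrix_def gu_def)
  show "(adj_matrix (gu (4,EK13) (2,EK2)) * PM) $$ (i, j) = (PM * adj_matrix (gu (5,EP5) (1,{}))) $$ (i, j)"
    using less6[OF i] less6[OF j]
    by (elim disjE) (simp_all add: PM_def PL_def adj_matrix_def gu_def EK13_def EK2_def EP5_def scalar_prod_def sum6)
qed (auto simp: PM_def adj_matrix_def gu_def)

lemma PQ: "PM * QM = 1\<^sub>m 6"
proof (rule eq_matI)
  fix i j assume "i < dim_row (1\<^sub>m 6 :: real mat)" "j < dim_col (1\<^sub>m 6 :: real mat)"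
  then have i: "i < 6" and j: "j < 6" by auto
  show "(PM * QM) $$ (i, j) = 1\<^sub>m 6 $$ (i, j)"
    using less6[OF i] less6[OF j]
    by (elim disjE) (simp_all add: PM_def PL_def QM_def QL_def scalar_prod_def sum6)
qed (auto simp: PM_def QM_def)

lemma QP: "QM * PM = 1\<^sub>m 6"
proof (rule eq_matI)
  fix i j assume "i < dim_row (1\<^sub>m 6 :: real mat)" "j < dim_col (1\<^sub>m 6 :: real mat)"
  then have i: "i < 6" and j: "j < 6" by auto
  show "(QM * PM) $$ (i, j) = 1\<^sub>m 6 $$ (i, j)"
    using less6[OF i] less6[OF j]
    by (elim disjE) (simp_all add: PM_def PL_def QM_def QL_def scalar_prod_def sum6)
qed (auto simp: PM_def QM_def)

lemma cospH: "cospectral (gu (4,EK13) (2,EK2)) (gu (5,EP5) (1,{}))"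
proof -
  let ?A = "adj_matrix (gu (4,EK13) (2,EK2))" and ?B = "adj_matrix (gu (5,EP5) (1,{}))"
  have cA: "?A \<in> carrier_mat 6 6" and cB: "?B \<in> carrier_mat 6 6"
    by (auto simp: adj_matrix_def gu_def)
  have cP: "PM \<in> carrier_mat 6 6" and cQ: "QM \<in> carrier_mat 6 6" by (auto simp: PM_def QM_def)
  have "?A = ?A * (PM * QM)" using cA by (simp add: PQ)
  also have "\<dots> = (?A * PM) * QM" using cA cP cQ by (simp add: assoc_mult_mat)
  also have "\<dots> = PM * ?B * QM" unfolding A_PM ..
  finally have eqA: "?A = PM * ?B * QM" .
  have "similar_mat ?A ?B" by (rule similar_matI[where P=PM and Q=QM and n=6]) (use eqA cA cB cP cQ PQ QP in auto)
  then show ?thesis unfolding cospectral_def adj_spectrum_def by (simp add: char_poly_similar)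
qed



lemma zf_closed:
  assumes "S \<subseteq> T" and cl: "\<forall>u w. u \<in> T \<longrightarrow> (u,w) \<in> snd G \<longrightarrow> (\<forall>x. (u,x) \<in> snd G \<and> x \<noteq> w \<longrightarrow> x \<in> T) \<longrightarrow> w \<in> T"
  shows "zf_closure G S \<subseteq> T"
proof
  fix x assume "x \<in> zf_closure G S" then show "x \<in> T"
  proof induct
    case (init v) then show ?case using assms(1) by auto
  next
    case (force u w) then show ?case using cl by blast
  qed
qed

definition zclosed :: "graph \<Rightarrow> nat set \<Rightarrow> bool" where
  "zclosed G T \<longleftrightarrow> (\<forall>u w. u \<in> T \<longrightarrow> (u,w) \<in> snd G \<longrightarrow> (\<forall>x. (u,x) \<in> snd G \<and> x \<noteq> w \<longrightarrow> x \<in> T) \<longrightarrow> w \<in> T)"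

lemma zclosed_empty: "zclosed G {}" unfolding zclosed_def by (intro allI impI, erule emptyE)

lemma zc0: "zclosed (4,EK13) {0}" unfolding zclosed_def
  by (intro allI impI, simp only: EK13_def snd_conv insert_iff empty_iff prod.inject,
      (elim disjE conjE FalseE; frule spec[of _ "2::nat"]; frule spec[of _ "1::nat"]; drule spec[of _ "3::nat"]); simp)
lemma zc1: "zclosed (4,EK13) {0,1}" unfolding zclosed_def
  by (intro allI impI, simp only: EK13_def snd_conv insert_iff empty_iff prod.inject,
      (elim disjE conjE FalseE; frule spec[of _ "2::nat"]; frule spec[of _ "1::nat"]; drule spec[of _ "3::nat"]); simp)
lemma zc2: "zclosed (4,EK13) {0,2}" unfolding zclosed_def
  by (intro allI impI, simp only: EK13_def snd_conv insert_iff empty_iff prod.inject,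
      (elim disjE conjE FalseE; frule spec[of _ "2::nat"]; frule spec[of _ "1::nat"]; drule spec[of _ "3::nat"]); simp)
lemma zc3: "zclosed (4,EK13) {0,3}" unfolding zclosed_def
  by (intro allI impI, simp only: EK13_def snd_conv insert_iff empty_iff prod.inject,
      (elim disjE conjE FalseE; frule spec[of _ "2::nat"]; frule spec[of _ "1::nat"]; drule spec[of _ "3::nat"]); simp)

lemma simple_K13: "simple_graph (4, EK13)" unfolding simple_graph_def EK13_def by auto
lemma simple_K2: "simple_graph (2, EK2)" unfolding simple_graph_def EK2_def by auto
lemma simple_P5: "simple_graph (5, EP5)" unfolding simple_graph_def EP5_def by auto
lemma simple_K1: "simple_graph (1, {})" unfolding simple_graph_def by auto
lemma simple_empty: "simple_graph (k, {})" unfolding simple_graph_def by auto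

lemma zclosed_sub: "S \<subseteq> T \<Longrightarrow> zclosed G T \<Longrightarrow> zf_closure G S \<subseteq> T"
  unfolding zclosed_def by (rule zf_closed)

lemma Z_K13: "2 \<le> zero_forcing_number (4, EK13)"
proof -
  obtain S where S: "S \<subseteq> {0..<4}" "card S = zero_forcing_number (4, EK13)" "zf_closure (4,EK13) S = {0..<4}"
    using fnum_ex[OF okcl_zf[OF simple_K13]] unfolding zfn_fnum by auto
  have fin: "finite S" using S(1) finite_subset by blast
  show ?thesis
  proof (rule ccontr)
    assume "\<not> ?thesis"
    then have "card S = 0 \<or> card S = 1" using S(2) by linarith
    then obtain T where T: "S \<subseteq> T" "3 \<notin> T \<or> 1 \<notin> T" "zclosed (4,EK13) T"
    proof
      assume "card S = 0"
      then have "S = {}" using fin by simp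
      then show ?thesis using zclosed_empty by (intro that[of "{}"]) simp_all
    next
      assume "card S = 1"
      then obtain v where v: "S = {v}" by (rule card_1_singletonE)
      then have "v < 4" using S(1) by auto
      then have "v = 0 \<or> v = 1 \<or> v = 2 \<or> v = 3" by auto
      then show ?thesis
      proof (elim disjE)
        assume "v = 0" then show ?thesis using v zc0 by (intro that[of "{0}"]) simp_all
      next
        assume "v = 1" then show ?thesis using v zc1 by (intro that[of "{0,1}"]) simp_all
      next
        assume "v = 2" then show ?thesis using v zc2 by (intro that[of "{0,2}"]) simp_all
      next
        assume "v = 3" then show ?thesis using v zc3 by (intro that[of "{0,3}"]) simp_all
      qed
    qed
    from zclosed_sub[OF T(1) T(3)] S(3) have "{0..<4} \<subseteq> T" by simp
    moreover have "3 \<in> {0..<4::nat}" "1 \<in> {0..<4::nat}" by auto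
    ultimately show False using T(2) by blast
  qed
qed

lemma Z_K2: "1 \<le> zero_forcing_number (2, EK2)"
proof -
  obtain S where S: "S \<subseteq> {0..<2}" "card S = zero_forcing_number (2, EK2)" "zf_closure (2,EK2) S = {0..<2}"
    using fnum_ex[OF okcl_zf[OF simple_K2]] unfolding zfn_fnum by auto
  show ?thesis
  proof (rule ccontr)
    assume "\<not> ?thesis"
    then have "S = {}" using S(1,2) finite_subset by (metis card_eq_0_iff finite_atLeastLessThan less_one not_le)
    then have "zf_closure (2,EK2) S \<subseteq> {}" using zclosed_sub[OF _ zclosed_empty] by blast
    with S(3) show False by auto
  qed
qed

lemma Z_P5: "zero_forcing_number (5, EP5) \<le> 1"
proof -
  let ?C = "zf_closure (5,EP5) {0}"
  have c0: "0 \<in> ?C" by (auto intro: zf_closure.init)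
  have c1: "1 \<in> ?C" by (rule zf_closure.force[OF c0]) (auto simp: EP5_def)
  have c2: "2 \<in> ?C" by (rule zf_closure.force[OF c1]) (use c0 in \<open>auto simp: EP5_def\<close>)
  have c3: "3 \<in> ?C" by (rule zf_closure.force[OF c2]) (use c1 in \<open>auto simp: EP5_def\<close>)
  have c4: "4 \<in> ?C" by (rule zf_closure.force[OF c3]) (use c2 in \<open>auto simp: EP5_def\<close>)
  have "?C \<subseteq> {0..<5}" using okclD[OF okcl_zf[OF simple_P5], of "{0}"] by auto
  moreover have "{0..<5} \<subseteq> ?C"
  proof
    fix x :: nat assume "x \<in> {0..<5}"
    then have "x = 0 \<or> x = 1 \<or> x = 2 \<or> x = 3 \<or> x = 4" by auto
    then show "x \<in> ?C" using c0 c1 c2 c3 c4 by auto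
  qed
  ultimately have "?C = {0..<fst (5::nat, EP5)}" by auto
  from fnum_le[where cl=zf_closure and S="{0}", OF _ this] show ?thesis unfolding zfn_fnum by simp
qed

lemma Z_K1: "zero_forcing_number (1, {}) \<le> 1"
proof -
  let ?C = "zf_closure (1,{}) {0}"
  have "?C \<subseteq> {0..<1}" using okclD[OF okcl_zf[OF simple_K1], of "{0}"] by auto
  moreover have "0 \<in> ?C" by (auto intro: zf_closure.init)
  ultimately have "?C = {0..<fst (1::nat, {}::(nat\<times>nat) set)}" by auto
  from fnum_le[where cl=zf_closure and S="{0}", OF _ this] show ?thesis unfolding zfn_fnum by simp
qed



lemma zfn_gu': "simple_graph G \<Longrightarrow> simple_graph H \<Longrightarrow>
   zero_forcing_number (gu G H) = zero_forcing_number G + zero_forcing_number H"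
  by (cases G, cases H) (simp add: zfn_gu)
lemma szfn_gu': "simple_graph G \<Longrightarrow> simple_graph H \<Longrightarrow>
   skew_zero_forcing_number (gu G H) = skew_zero_forcing_number G + skew_zero_forcing_number H"
  by (cases G, cases H) (simp add: szfn_gu)
lemma simple_gu': "simple_graph G \<Longrightarrow> simple_graph H \<Longrightarrow> simple_graph (gu G H)"
  by (cases G, cases H) (simp add: simple_gu)
lemma cospectral_gu': "simple_graph G \<Longrightarrow> simple_graph H \<Longrightarrow> simple_graph G' \<Longrightarrow> simple_graph H' \<Longrightarrow>
   cospectral G G' \<Longrightarrow> cospectral H H' \<Longrightarrow> cospectral (gu G H) (gu G' H')"
  by (cases G, cases H, cases G', cases H') (simp add: cospectral_gu)

lemma cospectral_refl: "cospectral G G" unfolding cospectral_def ..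
lemma cospectral_sym: "cospectral G H \<Longrightarrow> cospectral H G" unfolding cospectral_def by simp

lemma base_pair:
  assumes s1: "simple_graph G1" and s2: "simple_graph G2" and c: "cospectral G1 G2"
    and d: "skew_zero_forcing_number G1 \<noteq> skew_zero_forcing_number G2"
  shows "\<exists>P1 P2. simple_graph P1 \<and> simple_graph P2 \<and> cospectral P1 P2
           \<and> zero_forcing_number P1 \<noteq> zero_forcing_number P2
           \<and> skew_zero_forcing_number P1 \<noteq> skew_zero_forcing_number P2"
proof -
  define H1 where "H1 = gu (4,EK13) (2,EK2)"
  define H2 where "H2 = gu (5,EP5) (1,{})"
  have h1: "simple_graph H1" unfolding H1_def by (intro simple_gu simple_K13 simple_K2)
  have h2: "simple_graph H2" unfolding H2_def by (intro simple_gu simple_P5 simple_K1)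
  have ch: "cospectral H1 H2" unfolding H1_def H2_def by (rule cospH)
  have t1: "3 \<le> zero_forcing_number H1" unfolding H1_def
    using zfn_gu[OF simple_K13 simple_K2] Z_K13 Z_K2 by simp
  have t2: "zero_forcing_number H2 \<le> 2" unfolding H2_def
    using zfn_gu[OF simple_P5 simple_K1] Z_P5 Z_K1 by simp
  show ?thesis
  proof (cases "zero_forcing_number G1 = zero_forcing_number G2")
    case False
    show ?thesis
      by (rule exI[of _ "gu G1 H1"], rule exI[of _ "gu G2 H1"])
        (use s1 s2 h1 c False d in \<open>simp add: simple_gu' cospectral_gu' cospectral_refl zfn_gu' szfn_gu'\<close>)
  next
    case True
    show ?thesis
    proof (cases "skew_zero_forcing_number G1 + skew_zero_forcing_number H1 = skew_zero_forcing_number G2 + skew_zero_forcing_number H2")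
      case False
      show ?thesis
        by (rule exI[of _ "gu G1 H1"], rule exI[of _ "gu G2 H2"])
          (use s1 s2 h1 h2 c ch True False t1 t2 in \<open>simp add: simple_gu' cospectral_gu' zfn_gu' szfn_gu'\<close>)
    next
      case eq: True
      have ne: "skew_zero_forcing_number G1 + skew_zero_forcing_number H2 \<noteq> skew_zero_forcing_number G2 + skew_zero_forcing_number H1"
        using eq d by linarith
      show ?thesis
        by (rule exI[of _ "gu G1 H2"], rule exI[of _ "gu G2 H1"])
          (use s1 s2 h1 h2 c ch True ne t1 t2 in \<open>simp add: simple_gu' cospectral_gu' cospectral_sym zfn_gu' szfn_gu'\<close>)
    qed
  qed
qed

theorem proposition3p3:
  fixes n :: nat and E1 E2 :: "(nat \<times> nat) set"
  assumes "simple_graph (n, E1)" and "simple_graph (n, E2)"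
    and "cospectral (n, E1) (n, E2)"
    and "skew_zero_forcing_number (n, E1) \<noteq> skew_zero_forcing_number (n, E2)"
    and "skew_zero_forcing_number (n, E1) = max_skew_nullity (n, E1)"
    and "skew_zero_forcing_number (n, E2) = max_skew_nullity (n, E2)"
  shows "infinite {(G, H). simple_graph G \<and> simple_graph H \<and> cospectral G H
           \<and> zero_forcing_number G \<noteq> zero_forcing_number H
           \<and> skew_zero_forcing_number G \<noteq> skew_zero_forcing_number H}"
proof -
  obtain P1 P2 where P: "simple_graph P1" "simple_graph P2" "cospectral P1 P2"
     "zero_forcing_number P1 \<noteq> zero_forcing_number P2"
     "skew_zero_forcing_number P1 \<noteq> skew_zero_forcing_number P2"
    using base_pair[OF assms(1-4)] by blast
  define f where "f k = (gu P1 (k, {}), gu P2 (k, {}))" for k :: nat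
  have "inj f"
  proof
    fix a b assume "f a = f b"
    then have "fst (fst (f a)) = fst (fst (f b))" by simp
    then show "a = b" unfolding f_def gu_def by simp
  qed
  then have inf: "infinite (range f)" by (rule range_inj_infinite)
  have "range f \<subseteq> {(G, H). simple_graph G \<and> simple_graph H \<and> cospectral G H
           \<and> zero_forcing_number G \<noteq> zero_forcing_number H
           \<and> skew_zero_forcing_number G \<noteq> skew_zero_forcing_number H}"
  proof
    fix x assume "x \<in> range f"
    then obtain k where k: "x = f k" by blast
    have e: "simple_graph (k, {})" by (rule simple_empty)
    show "x \<in> {(G, H). simple_graph G \<and> simple_graph H \<and> cospectral G H
           \<and> zero_forcing_number G \<noteq> zero_forcing_number H
           \<and> skew_zero_forcing_number G \<noteq> skew_zero_forcing_number H}"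
      unfolding k f_def using P e
      by (simp add: simple_gu' cospectral_gu' cospectral_refl zfn_gu' szfn_gu')
  qed
  with inf show ?thesis using infinite_super by blast
qed


end
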